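(* If $\sum_{n=1}^N r_n \le C_{min}$, then for all $t\ge 0$ the backlog satisfies $B(t)\le \sum_n \sigma_n + \left(\sum_n r_n\right)\frac{L}{C_{min}}$.
   Context: A multiclass FIFO system serves packets from $N$ classes. Class $n$ has constant service rate $C_n>0$; $C_{min}=\min_n C_n$. The aggregate flow consists of all packets $p^{g,1},p^{g,2},\dots$ in order of arrival (ties broken arbitrarily), with arrival times $0\le a^{g,1}\le a^{g,2}\le\cdots$, lengths $l^{g,j}>0$, and departure times $d^{g,j}=\max\{a^{g,j},d^{g,j-1}\}+l^{g,j}/C_{c(j)}$, $d^{g,0}=0$, $c(j)$ the class of $p^{g,j}$. $L_n$ is the maximum packet length of class $n$, $L=\max_n L_n$. $A_n(s,t)$ is the total length of class-$n$ packets arriving in $[s,t]$; each class satisfies $A_n(s,t)\le r_n(t-s)+\sigma_n$ for all $0\le s\le t$, with $r_n,\sigma_n\ge0$. $A(t)$ is the total length of all packets arrived in $[0,t]$, $A^*(t)$ the total length of packets with departure time $\le t$, and the backlog is $B(t)=A(t)-A^*(t)$. *)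

theory Defs
  imports "HOL-Analysis.Analysis" "HOL-Library.Extended_Nat"
begin

text \<open>Packets of the aggregate flow are indexed 1, 2, ...; there are K of them
  (K = \<infinity> for an infinite flow). Classes are 0, ..., N-1.\<close>

definition packets :: "enat \<Rightarrow> nat set" where
  "packets K = {j. 1 \<le> j \<and> enat j \<le> K}"

primrec dep :: "(nat \<Rightarrow> real) \<Rightarrow> (nat \<Rightarrow> real) \<Rightarrow> (nat \<Rightarrow> real) \<Rightarrow> (nat \<Rightarrow> nat) \<Rightarrow> nat \<Rightarrow> real" where
  "dep a l C c 0 = 0"
| "dep a l C c (Suc j) = max (a (Suc j)) (dep a l C c j) + l (Suc j) / C (c (Suc j))"

definition arr_class :: "enat \<Rightarrow> (nat \<Rightarrow> real) \<Rightarrow> (nat \<Rightarrow> real) \<Rightarrow> (nat \<Rightarrow> nat) \<Rightarrow> nat \<Rightarrow> real \<Rightarrow> real \<Rightarrow> real" where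
  "arr_class K a l c n s t = (\<Sum>j\<in>{j\<in>packets K. c j = n \<and> s \<le> a j \<and> a j \<le> t}. l j)"

definition arr :: "enat \<Rightarrow> (nat \<Rightarrow> real) \<Rightarrow> (nat \<Rightarrow> real) \<Rightarrow> real \<Rightarrow> real" where
  "arr K a l t = (\<Sum>j\<in>{j\<in>packets K. 0 \<le> a j \<and> a j \<le> t}. l j)"

definition departed :: "enat \<Rightarrow> (nat \<Rightarrow> real) \<Rightarrow> (nat \<Rightarrow> real) \<Rightarrow> (nat \<Rightarrow> real) \<Rightarrow> (nat \<Rightarrow> nat) \<Rightarrow> real \<Rightarrow> real" where
  "departed K a l C c t = (\<Sum>j\<in>{j\<in>packets K. dep a l C c j \<le> t}. l j)"

definition backlog :: "enat \<Rightarrow> (nat \<Rightarrow> real) \<Rightarrow> (nat \<Rightarrow> real) \<Rightarrow> (nat \<Rightarrow> real) \<Rightarrow> (nat \<Rightarrow> nat) \<Rightarrow> real \<Rightarrow> real" where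
  "backlog K a l C c t = arr K a l t - departed K a l C c t"

definition maxlen_class :: "enat \<Rightarrow> (nat \<Rightarrow> real) \<Rightarrow> (nat \<Rightarrow> nat) \<Rightarrow> nat \<Rightarrow> real" where
  "maxlen_class K l c n =
     (if {j\<in>packets K. c j = n} = {} then 0 else Sup (l ` {j\<in>packets K. c j = n}))"

definition maxlen :: "nat \<Rightarrow> enat \<Rightarrow> (nat \<Rightarrow> real) \<Rightarrow> (nat \<Rightarrow> nat) \<Rightarrow> real" where
  "maxlen N K l c = Max ((maxlen_class K l c) ` {..<N})"

definition Cmin :: "nat \<Rightarrow> (nat \<Rightarrow> real) \<Rightarrow> real" where
  "Cmin N C = Min (C ` {..<N})"

end

theory Submission
  imports Defs
begin

lemma busy_period:
  assumes i1: "1 \<le> i" and ip: "i \<le> p"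
    and start: "dep a l C c (i-1) \<le> a i"
    and cont: "\<And>j. i < j \<Longrightarrow> j \<le> p \<Longrightarrow> a j < dep a l C c (j-1)"
  shows "dep a l C c p = a i + (\<Sum>q\<in>{i..p}. l q / C (c q))"
proof -
  have gen: "\<And>j. i \<le> j \<Longrightarrow> j \<le> p \<longrightarrow> dep a l C c j = a i + (\<Sum>q\<in>{i..j}. l q / C (c q))"
  proof -
    fix j :: nat assume "i \<le> j"
    then show "j \<le> p \<longrightarrow> dep a l C c j = a i + (\<Sum>q\<in>{i..j}. l q / C (c q))"
  proof (induction j rule: dec_induct)
    case base
    obtain k where k: "i = Suc k" using i1 by (cases i) auto
    show ?case using start by (simp add: k)
  next
    case (step n)
    show ?case
    proof
      assume "Suc n \<le> p"
      then have "a (Suc n) < dep a l C c n" using cont[of "Suc n"] step by auto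
      then have "dep a l C c (Suc n) = dep a l C c n + l (Suc n) / C (c (Suc n))" by simp
      also have "\<dots> = a i + (\<Sum>q\<in>{i..n}. l q / C (c q)) + l (Suc n) / C (c (Suc n))"
        using step \<open>Suc n \<le> p\<close> by auto
      also have "\<dots> = a i + (\<Sum>q\<in>{i..Suc n}. l q / C (c q))"
        using step by (simp add: sum.cl_ivl_Suc)
      finally show "dep a l C c (Suc n) = a i + (\<Sum>q\<in>{i..Suc n}. l q / C (c q))" .
    qed
  qed
  qed
  then show ?thesis using ip by simp
qed

theorem corollary2:
  fixes N :: nat and K :: enat
    and C r \<sigma> :: "nat \<Rightarrow> real"
    and a l :: "nat \<Rightarrow> real" and c :: "nat \<Rightarrow> nat"
  assumes N_pos: "0 < N"
    and C_pos: "\<And>n. n < N \<Longrightarrow> C n > 0"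
    and r_nonneg: "\<And>n. n < N \<Longrightarrow> r n \<ge> 0"
    and sigma_nonneg: "\<And>n. n < N \<Longrightarrow> \<sigma> n \<ge> 0"
    and class_range: "\<And>j. j \<in> packets K \<Longrightarrow> c j < N"
    and a_nonneg: "\<And>j. j \<in> packets K \<Longrightarrow> 0 \<le> a j"
    and a_mono: "\<And>i j. i \<in> packets K \<Longrightarrow> j \<in> packets K \<Longrightarrow> i \<le> j \<Longrightarrow> a i \<le> a j"
    and l_pos: "\<And>j. j \<in> packets K \<Longrightarrow> l j > 0"
    and l_bdd: "bdd_above (l ` packets K)"
    and fin_arrivals: "\<And>t. finite {j\<in>packets K. a j \<le> t}"
    and arrival_curve: "\<And>n s t. n < N \<Longrightarrow> 0 \<le> s \<Longrightarrow> s \<le> t \<Longrightarrow>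
                          arr_class K a l c n s t \<le> r n * (t - s) + \<sigma> n"
    and stability: "(\<Sum>n<N. r n) \<le> Cmin N C"
  shows "\<forall>t\<ge>0. backlog K a l C c t
           \<le> (\<Sum>n<N. \<sigma> n) + (\<Sum>n<N. r n) * (maxlen N K l c / Cmin N C)"
proof (intro allI impI)
  fix t :: real assume t0: "0 \<le> t"
  define P where "P = packets K"
  define d where "d = dep a l C c"
  define Ar where "Ar = {j\<in>P. 0 \<le> a j \<and> a j \<le> t}"
  define Dp where "Dp = {j\<in>P. d j \<le> t}"
  define Cm where "Cm = Cmin N C"
  define L where "L = maxlen N K l c"
  define R where "R = (\<Sum>n<N. r n)"
  define Sg where "Sg = (\<Sum>n<N. \<sigma> n)"
  have Pdown: "\<And>i j. j \<in> P \<Longrightarrow> 1 \<le> i \<Longrightarrow> i \<le> j \<Longrightarrow> i \<in> P"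
    unfolding P_def packets_def by (auto, metis enat_ord_simps(1) order_trans)
  have Cm_le: "\<And>n. n<N \<Longrightarrow> Cm \<le> C n"
    unfolding Cm_def Cmin_def by (intro Min_le) auto
  have "Cm \<in> C ` {..<N}" unfolding Cm_def Cmin_def using N_pos by (intro Min_in) auto
  then have Cm_pos: "Cm > 0" using C_pos by auto
  have lC_pos: "\<And>j. j\<in>P \<Longrightarrow> l j / C (c j) > 0"
    using l_pos C_pos class_range unfolding P_def by auto
  have d_ge_a: "a j \<le> d j" if jP: "j \<in> P" for j
  proof -
    have "1 \<le> j" using jP unfolding P_def packets_def by simp
    then obtain k where k: "j = Suc k" by (cases j) auto
    have "True" using jP unfolding P_def packets_def by (cases j) (auto simp: one_enat_def)
    show ?thesis using lC_pos[OF that] unfolding d_def k by simp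
  qed
  have Dsub: "Dp \<subseteq> Ar" using d_ge_a a_nonneg unfolding Dp_def Ar_def P_def by force
  have finAr: "finite Ar"
    by (rule finite_subset[OF _ fin_arrivals[of t]]) (auto simp: Ar_def P_def)
  have bl: "backlog K a l C c t = (\<Sum>j\<in>Ar-Dp. l j)"
    unfolding backlog_def arr_def departed_def
    using sum_diff[OF finAr Dsub, of l] by (simp add: Ar_def Dp_def P_def d_def)
  have Lmax: "l j \<le> L" if "j \<in> P" for j
  proof -
    have ne: "{j\<in>packets K. c j = c j} \<noteq> {}" using that P_def by auto
    have "l j \<le> Sup (l ` {j'\<in>packets K. c j' = c j})"
      by (rule cSup_upper) (use that P_def in \<open>auto intro: bdd_above_mono[OF l_bdd]\<close>)
    also have "\<dots> = maxlen_class K l c (c j)" unfolding maxlen_class_def using that P_def by auto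
    also have "\<dots> \<le> L" unfolding L_def maxlen_def
      by (rule Max_ge) (use that class_range P_def in auto)
    finally show ?thesis .
  qed
  have mc0: "maxlen_class K l c n \<ge> 0" for n
  proof (cases "{j\<in>packets K. c j = n} = {}")
    case True then show ?thesis unfolding maxlen_class_def by simp
  next
    case False
    then obtain j where j: "j \<in> packets K" "c j = n" by auto
    have "l j \<le> Sup (l ` {j'\<in>packets K. c j' = n})"
      by (rule cSup_upper) (use j in \<open>auto intro: bdd_above_mono[OF l_bdd]\<close>)
    then show ?thesis using False l_pos[OF j(1)] unfolding maxlen_class_def by simp
  qed
  have L0: "L \<ge> 0"
  proof -
    have "maxlen_class K l c 0 \<le> L" unfolding L_def maxlen_def
      by (rule Max_ge) (use N_pos in auto)
    then show ?thesis using mc0[of 0] by simp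
  qed
  have R0: "R \<ge> 0" unfolding R_def by (rule sum_nonneg) (use r_nonneg in auto)
  have Sg0: "Sg \<ge> 0" unfolding Sg_def by (rule sum_nonneg) (use sigma_nonneg in auto)
  have RCm: "R \<le> Cm" using stability by (simp add: R_def Cm_def)
  have main: "(\<Sum>j\<in>Ar-Dp. l j) \<le> Sg + R * (L / Cm)"
  proof (cases "Ar - Dp = {}")
    case True
    then have "(\<Sum>j\<in>Ar-Dp. l j) = 0" by (simp only: sum.empty)
    moreover have "0 \<le> R * (L / Cm)" using R0 L0 Cm_pos by simp
    ultimately show ?thesis using Sg0 by linarith
  next
    case False
    define p where "p = Min (Ar - Dp)"
    have finAD: "finite (Ar - Dp)" using finAr by simp
    have pin: "p \<in> Ar - Dp" unfolding p_def using False finAD by (intro Min_in) auto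
    have pmin: "\<And>j. j \<in> Ar - Dp \<Longrightarrow> p \<le> j" unfolding p_def using finAD by simp
    have pP: "p \<in> P" and apt: "a p \<le> t" and dpt: "d p > t"
      using pin by (auto simp: Ar_def Dp_def)
    have p1: "1 \<le> p" using pP unfolding P_def packets_def by simp
    define I where "I = {i. 1 \<le> i \<and> i \<le> p \<and> d (i-1) \<le> a i}"
    have finI: "finite I" unfolding I_def by (rule finite_subset[of _ "{..p}"]) auto
    have "1 \<in> P" using Pdown[OF pP] p1 by simp
    then have "1 \<in> I" using p1 a_nonneg unfolding I_def d_def P_def by simp
    define i where "i = Max I"
    have iI: "i \<in> I" unfolding i_def using finI \<open>1 \<in> I\<close> by (intro Max_in) auto
    have i1: "1 \<le> i" and ip: "i \<le> p" and istart: "d (i-1) \<le> a i" using iI I_def by auto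
    have iP: "i \<in> P" using Pdown[OF pP i1 ip] .
    have cont: "a j < d (j-1)" if "i < j" "j \<le> p" for j
    proof (rule ccontr)
      assume "\<not> a j < d (j-1)"
      then have "j \<in> I" using that i1 unfolding I_def by auto
      then have "j \<le> i" unfolding i_def using finI by simp
      then show False using that by simp
    qed
    have dp: "d p = a i + (\<Sum>q\<in>{i..p}. l q / C (c q))"
      unfolding d_def by (rule busy_period[OF i1 ip]) (use istart cont d_def in auto)
    define s where "s = a i"
    have s0: "0 \<le> s" using a_nonneg iP P_def s_def by auto
    have sap: "s \<le> a p" using a_mono[of i p] iP pP ip P_def s_def by auto
    have st: "s \<le> t" using sap apt by simp
    define S where "S = {j\<in>P. s \<le> a j \<and> a j \<le> t}"
    have finS: "finite S"
      by (rule finite_subset[OF _ fin_arrivals[of t]]) (auto simp: S_def P_def)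
    have sumS: "(\<Sum>j\<in>S. l j) = (\<Sum>n<N. arr_class K a l c n s t)"
    proof -
      have "(\<Sum>n<N. arr_class K a l c n s t) = (\<Sum>n<N. \<Sum>j\<in>S. if c j = n then l j else 0)"
      proof (rule sum.cong[OF refl])
        fix n
        have eq: "{j\<in>packets K. c j = n \<and> s \<le> a j \<and> a j \<le> t} = {j\<in>S. c j = n}"
          by (auto simp: S_def P_def)
        show "arr_class K a l c n s t = (\<Sum>j\<in>S. if c j = n then l j else 0)"
          unfolding arr_class_def eq by (simp add: sum.inter_filter[OF finS])
      qed
      also have "\<dots> = (\<Sum>j\<in>S. \<Sum>n<N. if c j = n then l j else 0)" by (rule sum.swap)
      also have "\<dots> = (\<Sum>j\<in>S. l j)"
        by (rule sum.cong[OF refl]) (use class_range in \<open>auto simp: S_def P_def\<close>)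
      finally show ?thesis by simp
    qed
    have arrS: "(\<Sum>j\<in>S. l j) \<le> R * (t - s) + Sg"
    proof -
      have "(\<Sum>n<N. arr_class K a l c n s t) \<le> (\<Sum>n<N. r n * (t - s) + \<sigma> n)"
        by (rule sum_mono) (use arrival_curve s0 st in auto)
      also have "\<dots> = R * (t - s) + Sg" by (simp add: R_def Sg_def sum.distrib sum_distrib_right)
      finally show ?thesis using sumS by simp
    qed
    define Y where "Y = (\<Sum>q\<in>{i..<p}. l q)"
    define Z where "Z = (\<Sum>q\<in>{i..<p}. l q / C (c q))"
    have qP: "q \<in> P" if "q \<in> {i..<p}" for q using Pdown[OF pP] that i1 by auto
    have Y0: "Y \<ge> 0" unfolding Y_def by (rule sum_nonneg) (use qP l_pos P_def in \<open>auto intro: less_imp_le\<close>)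
    have YZ: "Cm * Z \<le> Y"
    proof -
      have "Cm * Z = (\<Sum>q\<in>{i..<p}. Cm * (l q / C (c q)))" unfolding Z_def by (simp add: sum_distrib_left)
      also have "\<dots> \<le> Y" unfolding Y_def
      proof (rule sum_mono)
        fix q assume q: "q \<in> {i..<p}"
        have "Cm * (l q / C (c q)) \<le> C (c q) * (l q / C (c q))"
          using Cm_le[of "c q"] class_range qP[OF q] lC_pos[OF qP[OF q]] P_def
          by (intro mult_right_mono) auto
        also have "\<dots> = l q" using C_pos[of "c q"] class_range qP[OF q] P_def by simp
        finally show "Cm * (l q / C (c q)) \<le> l q" .
      qed
      finally show ?thesis .
    qed
    have ivl: "{i..p} = insert p {i..<p}" using ip by auto
    have Zeq: "Z = d p - s - l p / C (c p)" using dp unfolding Z_def s_def ivl by simp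
    have lpL: "l p / C (c p) \<le> L / Cm"
      using Lmax[OF pP] L0 Cm_pos Cm_le[of "c p"] class_range pP P_def
      by (intro frac_le) auto
    have Zgt: "Z > t - s - L / Cm" using Zeq lpL dpt by simp
    have disj: "(Ar - Dp) \<inter> {i..<p} = {}" using pmin by force
    have uni: "(Ar - Dp) \<union> {i..<p} \<subseteq> S"
    proof
      fix j assume "j \<in> (Ar - Dp) \<union> {i..<p}"
      then show "j \<in> S"
      proof
        assume j: "j \<in> Ar - Dp"
        have "a p \<le> a j" using a_mono[of p j] pmin[OF j] pP j by (auto simp: Ar_def P_def)
        then show ?thesis using j sap by (auto simp: S_def Ar_def)
      next
        assume j: "j \<in> {i..<p}"
        have "a i \<le> a j" "a j \<le> a p" using a_mono qP[OF j] iP pP j P_def by auto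
        then show ?thesis using qP[OF j] apt s_def S_def by auto
      qed
    qed
    have "(\<Sum>j\<in>Ar-Dp. l j) + Y = (\<Sum>j\<in>(Ar-Dp) \<union> {i..<p}. l j)"
      unfolding Y_def using finAD disj by (simp add: sum.union_disjoint)
    also have "\<dots> \<le> (\<Sum>j\<in>S. l j)"
      by (rule sum_mono2[OF finS uni]) (use l_pos in \<open>auto simp: S_def P_def intro: less_imp_le\<close>)
    finally have bY: "(\<Sum>j\<in>Ar-Dp. l j) \<le> R * (t - s) + Sg - Y" using arrS by simp
    define x where "x = t - s"
    define u where "u = L / Cm"
    have Lu: "L = Cm * u" unfolding u_def using Cm_pos by simp
    have x0: "x \<ge> 0" using st x_def by simp
    show ?thesis
    proof (cases "x \<le> u")
      case True
      have "R * x \<le> R * u" using True R0 by (rule mult_left_mono)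
      then show ?thesis using bY Y0 x_def u_def by simp
    next
      case False
      have "Y \<ge> Cm * (x - u)"
      proof -
        have "Cm * (x - u) \<le> Cm * Z" using Zgt Cm_pos x_def u_def by (intro mult_left_mono) auto
        then show ?thesis using YZ by simp
      qed
      moreover have "(R - Cm) * (x - u) \<le> 0"
        using RCm False by (intro mult_nonpos_nonneg) auto
      ultimately have "R * x - Y \<le> R * u" by (simp add: algebra_simps)
      then show ?thesis using bY x_def u_def by simp
    qed
  qed
  show "backlog K a l C c t \<le> (\<Sum>n<N. \<sigma> n) + (\<Sum>n<N. r n) * (maxlen N K l c / Cmin N C)"
    using main bl by (simp add: Sg_def R_def L_def Cm_def)
qed

end
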